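(* Let $F$ be a generalized fanout. Then the set $\{F,\text{free terminal}\}$ parsimoniously simulates, via planar simulations: (1) the NOT gate; (2) every generalized fanout $F'$; (3) the $k$-way fanout gate for every $k\ge 1$.
   Context: A gadget consists of a finite set of ports, equipped with a cyclic order, and a constraint, which is a set of subsets of the ports. A network of gadgets from $S$ is a finite undirected multigraph whose vertices are labeled by gadgets from $S$, each vertex's edge incidences being in bijection with the ports of its label. An assignment orients every edge; a vertex is satisfied if the set of its ports whose edges point into it belongs to its constraint. A simulation using gadgets from $S$ is a network of gadgets from $S$ that may additionally have dangling edges, each incident to only one vertex (equivalently, an extra outside-world vertex whose constraint contains every subset). It is planar if the graph including the outside world has a planar embedding respecting the port cyclic orders; the simulated gadget's ports are then the dangling edges in their order around the simulation. The simulated gadget's constraint consists of each set $D$ of dangling edges such that some assignment satisfying every non-outside-world vertex makes exactly the dangling edges in $D$ point into the simulation. A simulation is parsimonious if for each set in the simulated gadget's constraint there is exactly one such satisfying assignment realizing it; $S$ parsimoniously simulates $G$ if some parsimonious simulation using gadgets from $S$ has simulated gadget $G$. Gadgets: the free terminal has one port $a$ and constraint $\{\emptyset,\{a\}\}$. The NOT gate has ports $a,c$ and constraint $\{\emptyset,\{a,c\}\}$. The $k$-way fanout gate has ports $a,c_1,\dots,c_k$ and constraint $\{\{a\},\{c_1,\dots,c_k\}\}$. A generalized fanout is a gadget with at least three ports whose constraint consists of exactly two sets, which are complements of each other in the port set. *)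

theory Defs
  imports Main
begin

text \<open>A gadget with n ports: the ports are 0,...,n-1 in their cyclic order
  (0 -> 1 -> ... -> n-1 -> 0, counterclockwise); the constraint is a set of
  subsets of the ports.\<close>
type_synonym gadget = "nat \<times> nat set set"

definition nports :: "gadget \<Rightarrow> nat" where "nports G = fst G"
definition constr :: "gadget \<Rightarrow> nat set set" where "constr G = snd G"

definition wf_gadget :: "gadget \<Rightarrow> bool" where
  "wf_gadget G \<longleftrightarrow> constr G \<subseteq> Pow {..<nports G}"

text \<open>Isomorphism of gadgets: a bijection of ports preserving the cyclic order
  (i.e. a rotation) and the constraint.\<close>
definition gadget_iso :: "gadget \<Rightarrow> gadget \<Rightarrow> bool" where
  "gadget_iso G G' \<longleftrightarrow> nports G = nports G' \<and>
     (\<exists>r. constr G' = (\<lambda>X. (\<lambda>i. (i + r) mod nports G) ` X) ` constr G)"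

definition free_terminal :: gadget where "free_terminal = (1, {{}, {0}})"
definition not_gate :: gadget where "not_gate = (2, {{}, {0, 1}})"
text \<open>k-way fanout: port 0 is a, ports 1..k are c_1..c_k.\<close>
definition fanout :: "nat \<Rightarrow> gadget" where "fanout k = (k + 1, {{0}, {1..k}})"

definition generalized_fanout :: "gadget \<Rightarrow> bool" where
  "generalized_fanout G \<longleftrightarrow> nports G \<ge> 3 \<and>
     (\<exists>X. X \<subseteq> {..<nports G} \<and> constr G = {X, {..<nports G} - X})"

text \<open>Darts (edge ends): (Some v, i) is port i of vertex v; (None, j) is the j-th
  port of the outside world, j < m, i.e. the outer end of the j-th dangling edge.
  The fixed-point-free involution alpha pairs the two ends of each edge.\<close>
type_synonym dart = "nat option \<times> nat"

definition darts :: "nat set \<Rightarrow> (nat \<Rightarrow> gadget) \<Rightarrow> nat \<Rightarrow> dart set" where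
  "darts V lab m = {(Some v, i) | v i. v \<in> V \<and> i < nports (lab v)} \<union> {(None, j) | j. j < m}"

definition is_simulation ::
  "gadget set \<Rightarrow> nat set \<Rightarrow> (nat \<Rightarrow> gadget) \<Rightarrow> nat \<Rightarrow> (dart \<Rightarrow> dart) \<Rightarrow> bool" where
  "is_simulation S V lab m \<alpha> \<longleftrightarrow> finite V \<and> (\<forall>v\<in>V. lab v \<in> S) \<and>
     (\<forall>d\<in>darts V lab m. \<alpha> d \<in> darts V lab m \<and> \<alpha> (\<alpha> d) = d \<and> \<alpha> d \<noteq> d) \<and>
     (\<forall>j<m. fst (\<alpha> (None, j)) \<noteq> None)"

text \<open>The
  outside world (a vertex "at infinity") rotates in the opposite sense, so that
  the dangling edges 0,1,...,m-1 appear in this (counterclockwise) order around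
  the simulation.\<close>
definition rot :: "(nat \<Rightarrow> gadget) \<Rightarrow> nat \<Rightarrow> dart \<Rightarrow> dart" where
  "rot lab m d = (case d of (Some v, i) \<Rightarrow> (Some v, Suc i mod nports (lab v))
                          | (None, j) \<Rightarrow> (None, (j + m - 1) mod m))"

definition orbit_of :: "('a \<Rightarrow> 'a) \<Rightarrow> 'a \<Rightarrow> 'a set" where
  "orbit_of f x = range (\<lambda>k. (f ^^ k) x)"

definition num_orbits :: "('a \<Rightarrow> 'a) \<Rightarrow> 'a set \<Rightarrow> nat" where
  "num_orbits f D = card (orbit_of f ` D)"

definition num_components :: "('a \<Rightarrow> 'a) \<Rightarrow> ('a \<Rightarrow> 'a) \<Rightarrow> 'a set \<Rightarrow> nat" where
  "num_components f g D = card ((\<lambda>d. {e. (d, e) \<in> ({(x, f x) | x. x \<in> D} \<union> {(x, g x) | x. x \<in> D}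
        \<union> {(f x, x) | x. x \<in> D} \<union> {(g x, x) | x. x \<in> D})\<^sup>*}) ` D)"

text \<open>Planarity of the graph including the outside world with respect to the
  rotation system: Euler's formula V - E + F = 2 C for the combinatorial map
  (vertices = rot-orbits, edges = alpha-orbits, faces = (rot o alpha)-orbits),
  i.e. every component has genus 0.\<close>
definition planar_sim :: "nat set \<Rightarrow> (nat \<Rightarrow> gadget) \<Rightarrow> nat \<Rightarrow> (dart \<Rightarrow> dart) \<Rightarrow> bool" where
  "planar_sim V lab m \<alpha> \<longleftrightarrow>
     (let D = darts V lab m; \<sigma> = rot lab m in
       num_orbits \<sigma> D + num_orbits (\<sigma> \<circ> \<alpha>) D = num_orbits \<alpha> D + 2 * num_components \<sigma> \<alpha> D)"

text \<open>Assignments: H is the set of head darts (the edge points into the end H).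
  Every non-outside-world vertex must be satisfied.\<close>
definition sat_assignment :: "nat set \<Rightarrow> (nat \<Rightarrow> gadget) \<Rightarrow> nat \<Rightarrow> (dart \<Rightarrow> dart) \<Rightarrow> dart set \<Rightarrow> bool" where
  "sat_assignment V lab m \<alpha> H \<longleftrightarrow> H \<subseteq> darts V lab m \<and>
     (\<forall>d\<in>darts V lab m. d \<in> H \<longleftrightarrow> \<alpha> d \<notin> H) \<and>
     (\<forall>v\<in>V. {i. i < nports (lab v) \<and> (Some v, i) \<in> H} \<in> constr (lab v))"

text \<open>The dangling edges pointing into the simulation under H.\<close>
definition inward :: "nat \<Rightarrow> dart set \<Rightarrow> nat set" where
  "inward m H = {j. j < m \<and> (None, j) \<notin> H}"

definition simulated_gadget :: "nat set \<Rightarrow> (nat \<Rightarrow> gadget) \<Rightarrow> nat \<Rightarrow> (dart \<Rightarrow> dart) \<Rightarrow> gadget" where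
  "simulated_gadget V lab m \<alpha> = (m, {inward m H | H. sat_assignment V lab m \<alpha> H})"

definition parsimonious :: "nat set \<Rightarrow> (nat \<Rightarrow> gadget) \<Rightarrow> nat \<Rightarrow> (dart \<Rightarrow> dart) \<Rightarrow> bool" where
  "parsimonious V lab m \<alpha> \<longleftrightarrow>
     (\<forall>X \<in> constr (simulated_gadget V lab m \<alpha>).
        \<exists>!H. sat_assignment V lab m \<alpha> H \<and> inward m H = X)"

definition planar_pars_simulates :: "gadget set \<Rightarrow> gadget \<Rightarrow> bool" where
  "planar_pars_simulates S G \<longleftrightarrow> (\<exists>V lab m \<alpha>.
     is_simulation S V lab m \<alpha> \<and> planar_sim V lab m \<alpha> \<and> parsimonious V lab m \<alpha> \<and>
     gadget_iso (simulated_gadget V lab m \<alpha>) G)"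

end

theory Submission
  imports Defs
begin

lemma funpow_in:
  assumes "\<forall>x\<in>D. f x \<in> D" "x \<in> D" shows "(f ^^ k) x \<in> D"
  using assms by (induction k) auto

lemma inj_on_funpow:
  assumes "\<forall>x\<in>D. f x \<in> D" "inj_on f D" shows "inj_on (f ^^ k) D"
proof (induction k)
  case 0 then show ?case by simp
next
  case (Suc k)
  have "inj_on (f \<circ> (f ^^ k)) D"
    using Suc assms by (intro comp_inj_on) (auto intro: inj_on_subset funpow_in)
  then show ?case by (simp add: funpow_Suc_right[symmetric] funpow_swap1 comp_def)
qed

lemma funpow_period:
  assumes fin: "finite D" and maps: "\<forall>x\<in>D. f x \<in> D" and inj: "inj_on f D" and x: "x \<in> D"
  shows "\<exists>p>0. (f ^^ p) x = x"
proof -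
  have "\<not> inj_on (\<lambda>k. (f ^^ k) x) {..card D}"
  proof
    assume i: "inj_on (\<lambda>k. (f ^^ k) x) {..card D}"
    have "(\<lambda>k. (f ^^ k) x) ` {..card D} \<subseteq> D" using funpow_in[OF maps x] by auto
    then have "card ((\<lambda>k. (f ^^ k) x) ` {..card D}) \<le> card D" using fin by (simp add: card_mono)
    then show False using card_image[OF i] by simp
  qed
  then obtain i j where ij: "i \<le> card D" "j \<le> card D" "i \<noteq> j" "(f ^^ i) x = (f ^^ j) x"
    unfolding inj_on_def by auto
  have main: "(f ^^ (b - a)) x = x" if "a < b" "(f ^^ a) x = (f ^^ b) x" for a b
  proof -
    have "(f ^^ a) ((f ^^ (b - a)) x) = (f ^^ (a + (b - a))) x"
      by (simp add: funpow_add)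
    also have "\<dots> = (f ^^ b) x" using that by simp
    also have "\<dots> = (f ^^ a) x" using that by simp
    finally show ?thesis
      using inj_on_funpow[OF maps inj, of a] funpow_in[OF maps x] x unfolding inj_on_def by blast
  qed
  show ?thesis
  proof (cases "i < j")
    case True then show ?thesis using main[of i j] ij by (intro exI[of _ "j - i"]) auto
  next
    case False then have "j < i" using ij by simp
    then show ?thesis using main[of j i] ij by (intro exI[of _ "i - j"]) auto
  qed
qed

lemma orbit_of_funpow_sub: "orbit_of f ((f ^^ k) x) \<subseteq> orbit_of f x"
proof
  fix y assume "y \<in> orbit_of f ((f ^^ k) x)"
  then obtain j where "y = (f ^^ j) ((f ^^ k) x)" unfolding orbit_of_def by auto
  then have "y = (f ^^ (j + k)) x" by (simp add: funpow_add)
  then show "y \<in> orbit_of f x" unfolding orbit_of_def by auto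
qed

lemma orbit_of_funpow:
  assumes fin: "finite D" and maps: "\<forall>x\<in>D. f x \<in> D" and inj: "inj_on f D" and x: "x \<in> D"
  shows "orbit_of f ((f ^^ k) x) = orbit_of f x"
proof
  show "orbit_of f ((f ^^ k) x) \<subseteq> orbit_of f x" by (rule orbit_of_funpow_sub)
  obtain p where p: "p > 0" "(f ^^ p) x = x" using funpow_period[OF assms] by blast
  have pk: "(f ^^ (p * k)) x = x"
    by (induction k) (auto simp: funpow_add comp_def p(2) mult.commute[of p] add.commute)
  have kk: "p * k - k + k = p * k" using p(1) by (simp add: le_add_diff_inverse2)
  have "(f ^^ (p * k - k)) ((f ^^ k) x) = (f ^^ (p * k - k + k)) x" by (simp add: funpow_add)
  then have "(f ^^ (p * k - k)) ((f ^^ k) x) = x" using pk kk by simp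
  then have "x \<in> orbit_of f ((f ^^ k) x)" unfolding orbit_of_def by (metis rangeI)
  then obtain a where a: "x = (f ^^ a) ((f ^^ k) x)" unfolding orbit_of_def by auto
  show "orbit_of f x \<subseteq> orbit_of f ((f ^^ k) x)"
    using orbit_of_funpow_sub[of f a "(f ^^ k) x"] a by simp
qed

lemma reach_by_rank:
  assumes maps: "\<forall>x\<in>D. f x \<in> D"
    and step: "\<forall>x\<in>D. x \<notin> R \<longrightarrow> f x \<in> R \<or> h (f x) < (h x :: nat)"
  shows "\<forall>x\<in>D. \<exists>k. (f ^^ k) x \<in> R"
proof
  fix x assume "x \<in> D"
  then show "\<exists>k. (f ^^ k) x \<in> R"
  proof (induction "h x" arbitrary: x rule: less_induct)
    case less
    show ?case
    proof (cases "x \<in> R")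
      case True then show ?thesis by (intro exI[of _ 0]) simp
    next
      case False
      then have "f x \<in> R \<or> h (f x) < h x" using step less by auto
      then show ?thesis
      proof
        assume "f x \<in> R" then show ?thesis by (intro exI[of _ 1]) simp
      next
        assume "h (f x) < h x"
        then obtain k where "(f ^^ k) (f x) \<in> R" using less maps by blast
        then show ?thesis by (metis funpow_Suc_right comp_apply)
      qed
    qed
  qed
qed

lemma num_orbits_reps:
  assumes fin: "finite D" and maps: "\<forall>x\<in>D. f x \<in> D" and inj: "inj_on f D"
    and RD: "R \<subseteq> D" and finv: "\<forall>x\<in>D. g (f x) = g x" and injg: "inj_on g R"
    and reach: "\<forall>x\<in>D. \<exists>k. (f ^^ k) x \<in> R"
  shows "num_orbits f D = card R"
proof -
  have ginv: "g ((f ^^ k) x) = g x" if "x \<in> D" for x k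
    using that by (induction k) (auto simp: finv funpow_in[OF maps])
  have "orbit_of f ` D = orbit_of f ` R"
  proof
    show "orbit_of f ` R \<subseteq> orbit_of f ` D" using RD by auto
    show "orbit_of f ` D \<subseteq> orbit_of f ` R"
    proof
      fix Ob assume "Ob \<in> orbit_of f ` D"
      then obtain x where x: "x \<in> D" "Ob = orbit_of f x" by auto
      obtain k where "(f ^^ k) x \<in> R" using reach x by auto
      then show "Ob \<in> orbit_of f ` R" using orbit_of_funpow[OF fin maps inj x(1), of k] x by (metis image_eqI)
    qed
  qed
  moreover have "inj_on (orbit_of f) R"
  proof (rule inj_onI)
    fix a b assume ab: "a \<in> R" "b \<in> R" "orbit_of f a = orbit_of f b"
    have "b \<in> orbit_of f b" unfolding orbit_of_def by (metis funpow_0 rangeI)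
    then obtain k where "b = (f ^^ k) a" using ab unfolding orbit_of_def by auto
    then have "g b = g a" using ginv ab RD by auto
    then show "a = b" using injg ab unfolding inj_on_def by auto
  qed
  ultimately show ?thesis unfolding num_orbits_def by (simp add: card_image)
qed

lemma card_comp_one:
  assumes s: "sym (r\<^sup>*)" and x0: "x0 \<in> D" and conn: "\<forall>x\<in>D. (x, x0) \<in> r\<^sup>*"
  shows "card ((\<lambda>d. {e. (d, e) \<in> r\<^sup>*}) ` D) = 1"
proof -
  have eq: "{e. (d, e) \<in> r\<^sup>*} = {e. (x0, e) \<in> r\<^sup>*}" if "d \<in> D" for d
  proof -
    have 1: "(d, x0) \<in> r\<^sup>*" using conn that by blast
    then have 2: "(x0, d) \<in> r\<^sup>*" using s unfolding sym_def by blast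
    show ?thesis using 1 2 by (auto intro: rtrancl_trans)
  qed
  have "(\<lambda>d. {e. (d, e) \<in> r\<^sup>*}) ` D = {{e. (x0, e) \<in> r\<^sup>*}}"
  proof
    show "(\<lambda>d. {e. (d, e) \<in> r\<^sup>*}) ` D \<subseteq> {{e. (x0, e) \<in> r\<^sup>*}}" using eq by blast
    show "{{e. (x0, e) \<in> r\<^sup>*}} \<subseteq> (\<lambda>d. {e. (d, e) \<in> r\<^sup>*}) ` D" using x0 by blast
  qed
  then show ?thesis by simp
qed

lemma num_components_one:
  assumes x0: "x0 \<in> D"
    and conn: "\<forall>x\<in>D. (x, x0) \<in> ({(x, f x) | x. x \<in> D} \<union> {(x, g x) | x. x \<in> D}
        \<union> {(f x, x) | x. x \<in> D} \<union> {(g x, x) | x. x \<in> D})\<^sup>*"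
  shows "num_components f g D = 1"
proof -
  define A where "A = {(x, f x) | x. x \<in> D}"
  define B where "B = {(x, g x) | x. x \<in> D}"
  have A': "{(f x, x) | x. x \<in> D} = A\<inverse>" unfolding A_def by blast
  have B': "{(g x, x) | x. x \<in> D} = B\<inverse>" unfolding B_def by blast
  have "sym (A \<union> B \<union> A\<inverse> \<union> B\<inverse>)" unfolding sym_def by blast
  then have s: "sym ((A \<union> B \<union> A\<inverse> \<union> B\<inverse>)\<^sup>*)" by (rule sym_rtrancl)
  show ?thesis unfolding num_components_def A_def[symmetric] B_def[symmetric] A' B'
    using card_comp_one[OF s x0] conn unfolding A_def[symmetric] B_def[symmetric] A' B' by blast
qed

locale ring_sim =
  fixes n :: nat and X :: "nat set" and l :: nat and dl :: nat and N :: nat and Y :: "nat set"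
  assumes n3: "3 \<le> n" and Xsub: "X \<subseteq> {..<n}" and ll: "l < n" and dl2: "2 \<le> dl" and dln: "dl < n"
    and lr: "l \<in> X \<longleftrightarrow> (l + dl) mod n \<in> X" and N1: "1 \<le> N" and Ysub: "Y \<subseteq> {..<N}"
begin

definition "r = (l + dl) mod n"
definition "d = Suc l mod n"
definition "M = 2 * N"
definition "rel p = (p + n - l) mod n"
definition "dang i \<longleftrightarrow> (odd i \<longleftrightarrow> i div 2 \<in> Y)"
definition "cnt i = i div 2 + (if odd i \<and> i div 2 \<notin> Y then 1 else 0)"
definition "apos j = 2 * j + (if j \<in> Y then 1 else 0)"
definition "used i p \<longleftrightarrow> p = l \<or> p = r \<or> (p = d \<and> dang i)"
definition "lf i p = 2 * (n * i + p) + 1"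
definition "Vs = {2 * i | i. i < M} \<union> {lf i p | i p. i < M \<and> p < n \<and> \<not> used i p}"
definition "Fg = (n, {X, {..<n} - X})"
definition "lab v = (if even v then Fg else free_terminal)"
definition alpha :: "dart \<Rightarrow> dart" where
 "alpha x = (case x of (Some v, p) \<Rightarrow> if even v then
     (if p = r then (Some (2 * (Suc (v div 2) mod M)), l)
      else if p = l then (Some (2 * ((v div 2 + M - 1) mod M)), r)
      else if p = d \<and> dang (v div 2) then (None, v div 2 div 2)
      else (Some (lf (v div 2) p), 0))
    else (Some (2 * (v div 2 div n)), v div 2 mod n)
   | (None, j) \<Rightarrow> (Some (2 * apos j), d))"

abbreviation "DD \<equiv> darts Vs lab N"
abbreviation "sig \<equiv> rot lab N"
abbreviation "phi \<equiv> sig \<circ> alpha"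

lemma n0: "0 < n" using n3 by simp
lemma r_lt: "r < n" unfolding r_def using n0 by simp
lemma d_lt: "d < n" unfolding d_def using n0 by simp
lemma rel_lt: "rel p < n" unfolding rel_def using n0 by simp
lemma rel_l: "rel l = 0" unfolding rel_def by simp
lemma rel_d: "rel d = 1" unfolding rel_def d_def using ll n3
  by (cases "Suc l = n") (auto simp: mod_if)
lemma rel_r: "rel r = dl" unfolding rel_def r_def using ll dln
  by (cases "l + dl < n") (auto simp: mod_if)
lemma rel_inj: "p < n \<Longrightarrow> q < n \<Longrightarrow> rel p = rel q \<Longrightarrow> p = q"
  unfolding rel_def using ll by (auto simp: mod_if split: if_splits)
lemma rel_suc: "p < n \<Longrightarrow> rel (Suc p mod n) = Suc (rel p) mod n"
  unfolding rel_def using ll by (auto simp: mod_if)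
lemma l_ne_r: "l \<noteq> r" using rel_l rel_r dl2 by auto
lemma d_ne_l: "d \<noteq> l" using rel_l rel_d by auto
lemma d_ne_r: "d \<noteq> r" using rel_d rel_r dl2 by auto
lemma lr': "l \<in> X \<longleftrightarrow> r \<in> X" using lr unfolding r_def .

lemma lf_odd: "odd (lf i p)" unfolding lf_def by simp
lemma lf_div: "p < n \<Longrightarrow> lf i p div 2 div n = i" unfolding lf_def by simp
lemma lf_mod: "p < n \<Longrightarrow> lf i p div 2 mod n = p" unfolding lf_def by simp
lemma lf_inj: "p < n \<Longrightarrow> q < n \<Longrightarrow> lf i p = lf j q \<Longrightarrow> i = j \<and> p = q"
  using lf_div lf_mod by metis

lemma nports_Fg[simp]: "nports Fg = n" unfolding Fg_def nports_def by simp
lemma constr_Fg: "constr Fg = {X, {..<n} - X}" unfolding Fg_def constr_def by simp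
lemma nports_ft[simp]: "nports free_terminal = 1" unfolding free_terminal_def nports_def by simp
lemma constr_ft: "constr free_terminal = {{}, {0}}" unfolding free_terminal_def constr_def by simp
lemma lab_P[simp]: "lab (2 * i) = Fg" unfolding lab_def by simp
lemma lab_L[simp]: "lab (lf i p) = free_terminal" unfolding lab_def using lf_odd by simp

lemma M_even: "even M" unfolding M_def by simp
lemma M_pos: "0 < M" unfolding M_def using N1 by simp

lemma PinD: "i < M \<Longrightarrow> p < n \<Longrightarrow> (Some (2 * i), p) \<in> DD"
  unfolding darts_def Vs_def by auto
lemma LinD: "i < M \<Longrightarrow> p < n \<Longrightarrow> \<not> used i p \<Longrightarrow> (Some (lf i p), 0) \<in> DD"
  unfolding darts_def Vs_def by auto
lemma OinD: "j < N \<Longrightarrow> (None, j) \<in> DD"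
  unfolding darts_def by auto

lemma D_cases:
  assumes "x \<in> DD"
  obtains (P) i p where "x = (Some (2 * i), p)" "i < M" "p < n"
    | (L) i p where "x = (Some (lf i p), 0)" "i < M" "p < n" "\<not> used i p"
    | (O) j where "x = (None, j)" "j < N"
  using assms unfolding darts_def Vs_def by auto

lemma finite_Vs: "finite Vs"
proof -
  have "{lf i p | i p. i < M \<and> p < n \<and> \<not> used i p} \<subseteq> (\<lambda>(i, p). lf i p) ` ({..<M} \<times> {..<n})"
    by auto
  then have "finite {lf i p | i p. i < M \<and> p < n \<and> \<not> used i p}"
    by (rule finite_subset) auto
  moreover have "{2 * i | i. i < M} = (\<lambda>i. 2 * i) ` {..<M}" by auto
  ultimately show ?thesis unfolding Vs_def by simp
qed

lemma finite_D: "finite DD"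
proof -
  have "DD \<subseteq> ((\<lambda>(i, p). (Some (2 * i), p)) ` ({..<M} \<times> {..<n})) \<union>
      ((\<lambda>(i, p). (Some (lf i p), 0)) ` ({..<M} \<times> {..<n})) \<union> ((\<lambda>j. (None, j)) ` {..<N})"
  proof
    fix x assume "x \<in> DD"
    then show "x \<in> ((\<lambda>(i, p). (Some (2 * i), p)) ` ({..<M} \<times> {..<n})) \<union>
      ((\<lambda>(i, p). (Some (lf i p), 0)) ` ({..<M} \<times> {..<n})) \<union> ((\<lambda>j. (None, j)) ` {..<N})"
      by (cases rule: D_cases) auto
  qed
  then show ?thesis by (rule finite_subset) auto
qed

lemma dang_apos: "dang (apos j)" unfolding dang_def apos_def by auto
lemma apos_div: "apos j div 2 = j" unfolding apos_def by auto
lemma apos_lt: "j < N \<Longrightarrow> apos j < M" unfolding apos_def M_def by auto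
lemma apos_odd: "odd (apos j) \<longleftrightarrow> j \<in> Y" unfolding apos_def by auto
lemma apos_dang: "dang i \<Longrightarrow> apos (i div 2) = i" unfolding apos_def dang_def by auto
lemma div2_lt: "i < M \<Longrightarrow> i div 2 < N" unfolding M_def by auto

lemma modM_suc: "i < M \<Longrightarrow> ((Suc i mod M) + M - 1) mod M = i"
  using M_pos by (cases "Suc i = M") (auto simp: mod_if)
lemma modM_pred: "i < M \<Longrightarrow> Suc ((i + M - 1) mod M) mod M = i"
  using M_pos by (cases "i = 0") (auto simp: mod_if)
lemma modM_lt: "(k::nat) mod M < M" using M_pos by simp

lemma alpha_P_r: "alpha (Some (2 * i), r) = (Some (2 * (Suc i mod M)), l)"
  unfolding alpha_def by simp
lemma alpha_P_l: "alpha (Some (2 * i), l) = (Some (2 * ((i + M - 1) mod M)), r)"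
  unfolding alpha_def using l_ne_r by simp
lemma alpha_P_d: "dang i \<Longrightarrow> alpha (Some (2 * i), d) = (None, i div 2)"
  unfolding alpha_def using d_ne_l d_ne_r by simp
lemma alpha_P_u: "\<not> used i p \<Longrightarrow> alpha (Some (2 * i), p) = (Some (lf i p), 0)"
  unfolding alpha_def used_def by auto
lemma alpha_L: "p < n \<Longrightarrow> alpha (Some (lf i p), 0) = (Some (2 * i), p)"
  unfolding alpha_def using lf_odd lf_div lf_mod by simp
lemma alpha_O: "alpha (None, j) = (Some (2 * apos j), d)"
  unfolding alpha_def by simp

lemma used_l: "used i l" and used_r: "used i r" and used_d: "dang i \<Longrightarrow> used i d"
  unfolding used_def by auto

lemma alpha_props: assumes x: "x \<in> DD" shows "alpha x \<in> DD \<and> alpha (alpha x) = x \<and> alpha x \<noteq> x"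
  using x proof (cases rule: D_cases)
  case (P i p)
  show ?thesis
  proof (cases "p = r")
    case True then show ?thesis using P alpha_P_r alpha_P_l modM_suc PinD modM_lt ll l_ne_r by auto
  next
    case F1: False show ?thesis
    proof (cases "p = l")
      case True then show ?thesis using P alpha_P_r alpha_P_l modM_pred PinD modM_lt r_lt l_ne_r by auto
    next
      case F2: False show ?thesis
      proof (cases "p = d \<and> dang i")
        case True then show ?thesis using P alpha_P_d alpha_O apos_dang OinD div2_lt by auto
      next
        case False
        then have u: "\<not> used i p" using F1 F2 unfolding used_def by auto
        moreover have "lf i p \<noteq> 2 * i" using lf_odd[of i p] by auto
        ultimately show ?thesis using P alpha_P_u alpha_L LinD by auto
      qed
    qed
  qed
next
  case (L i p)
  moreover have "lf i p \<noteq> 2 * i" using lf_odd[of i p] by auto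
  ultimately show ?thesis using alpha_P_u alpha_L PinD by auto
next
  case (O j) then show ?thesis using alpha_O alpha_P_d dang_apos apos_div apos_lt PinD d_lt by auto
qed

lemma is_sim: "is_simulation {Fg, free_terminal} Vs lab N alpha"
  unfolding is_simulation_def
proof (intro conjI)
  show "finite Vs" by (rule finite_Vs)
  show "\<forall>v\<in>Vs. lab v \<in> {Fg, free_terminal}" unfolding lab_def by auto
  show "\<forall>d\<in>DD. alpha d \<in> DD \<and> alpha (alpha d) = d \<and> alpha d \<noteq> d" using alpha_props by blast
  show "\<forall>j<N. fst (alpha (None, j)) \<noteq> None" using alpha_O by simp
qed

end

context ring_sim begin

lemma sig_P: "sig (Some (2 * i), p) = (Some (2 * i), Suc p mod n)"
  unfolding rot_def by simp
lemma sig_L: "sig (Some (lf i p), 0) = (Some (lf i p), 0)"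
  unfolding rot_def by simp
lemma sig_O: "sig (None, j) = (None, (j + N - 1) mod N)"
  unfolding rot_def by simp

lemma Suc_l: "Suc l mod n = d" unfolding d_def ..

lemma phi_r: "phi (Some (2 * i), r) = (Some (2 * (Suc i mod M)), d)"
  using alpha_P_r sig_P Suc_l by simp
lemma phi_l: "phi (Some (2 * i), l) = (Some (2 * ((i + M - 1) mod M)), Suc r mod n)"
  using alpha_P_l sig_P by simp
lemma phi_d: "dang i \<Longrightarrow> phi (Some (2 * i), d) = (None, (i div 2 + N - 1) mod N)"
  using alpha_P_d sig_O by simp
lemma phi_u: "\<not> used i p \<Longrightarrow> phi (Some (2 * i), p) = (Some (lf i p), 0)"
  using alpha_P_u sig_L by simp
lemma phi_L: "p < n \<Longrightarrow> phi (Some (lf i p), 0) = (Some (2 * i), Suc p mod n)"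
  using alpha_L sig_P by simp
lemma phi_O: "phi (None, j) = (Some (2 * apos j), Suc d mod n)"
  using alpha_O sig_P by simp

lemma sig_maps: "x \<in> DD \<Longrightarrow> sig x \<in> DD"
  by (erule D_cases) (auto simp: sig_P sig_L sig_O intro: PinD LinD OinD n0 N1)

lemma sig_inj: "inj_on sig DD"
proof (rule inj_onI)
  fix x y assume x: "x \<in> DD" and y: "y \<in> DD" and e: "sig x = sig y"
  have fe: "fst (sig z) = fst z" for z unfolding rot_def by (auto split: prod.splits option.splits)
  have "fst x = fst y" using fe[of x] fe[of y] e by simp
  show "x = y"
  proof (cases "fst x")
    case None
    then obtain j k where "x = (None, j)" "j < N" "y = (None, k)" "k < N"
      using x y \<open>fst x = fst y\<close> by (auto elim!: D_cases)
    then show ?thesis using e sig_O by (auto simp: mod_if split: if_splits)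
  next
    case (Some v)
    have "snd x < nports (lab v)" "snd y < nports (lab v)"
      using x y Some \<open>fst x = fst y\<close> unfolding darts_def by auto
    moreover have "Suc (snd x) mod nports (lab v) = Suc (snd y) mod nports (lab v)"
      using e Some \<open>fst x = fst y\<close> unfolding rot_def by (cases x, cases y) auto
    ultimately have "snd x = snd y" by (auto simp: mod_if split: if_splits)
    then show ?thesis using \<open>fst x = fst y\<close> by (simp add: prod_eq_iff)
  qed
qed

lemma alpha_maps: "x \<in> DD \<Longrightarrow> alpha x \<in> DD" using alpha_props by blast
lemma alpha_inj: "inj_on alpha DD"
  by (rule inj_onI) (metis alpha_props)
lemma phi_maps: "x \<in> DD \<Longrightarrow> phi x \<in> DD" using alpha_maps sig_maps by simp
lemma phi_inj: "inj_on phi DD"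
  using alpha_inj sig_inj alpha_maps by (intro comp_inj_on) (auto intro: inj_on_subset)

lemma cnt_0: "cnt 0 = 0" unfolding cnt_def by simp
lemma cnt_Suc: "cnt (Suc i) = cnt i + (if dang i then 1 else 0)"
proof (cases "even i")
  case True then obtain k where "i = 2 * k" by (auto elim: evenE)
  then show ?thesis unfolding cnt_def dang_def by simp
next
  case False then obtain k where "i = 2 * k + 1" by (auto elim: oddE)
  then show ?thesis unfolding cnt_def dang_def by simp
qed
lemma cnt_M: "cnt M = N" unfolding cnt_def M_def by simp
lemma cnt_dang: "dang i \<Longrightarrow> cnt i = i div 2" unfolding cnt_def dang_def by auto
lemma cnt_apos: "cnt (apos j) = j" using cnt_dang[OF dang_apos] apos_div by simp

lemma used_rel: "p < n \<Longrightarrow> used i p \<longleftrightarrow> rel p = 0 \<or> rel p = dl \<or> (rel p = 1 \<and> dang i)"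
  unfolding used_def using rel_inj[of p l] rel_inj[of p r] rel_inj[of p d] rel_l rel_r rel_d ll r_lt d_lt
  by auto

definition "inner (q::nat) \<longleftrightarrow> q = 0 \<or> dl < q"
definition "G i (q::nat) = cnt i + (if dang i \<and> 2 \<le> q then 1 else 0)"
definition "fP i (q::nat) = (if inner q then N else (G i q + N - 1) mod N)"
definition "eP i (q::nat) = (if dang i \<and> q \<le> 1 then 1 else dl)"
definition "KK = 2 * n"
definition "hP i (q::nat) = (if inner q then i * KK + 2 * ((n - q) mod n)
   else (M - i) * KK + 2 * (eP i q - q) + (if G i q = N then M * KK else 0))"
definition fD :: "dart \<Rightarrow> nat" where
  "fD x = (case x of (None, j) \<Rightarrow> j | (Some v, p) \<Rightarrow>
     if even v then fP (v div 2) (rel p) else fP (v div 2 div n) (rel (v div 2 mod n)))"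
definition hD :: "dart \<Rightarrow> nat" where
  "hD x = (case x of (None, j) \<Rightarrow> 0 | (Some v, p) \<Rightarrow>
     if even v then hP (v div 2) (rel p) else hP (v div 2 div n) (rel (v div 2 mod n)) - 1)"

lemma fD_P: "fD (Some (2 * i), p) = fP i (rel p)" unfolding fD_def by simp
lemma fD_L: "p < n \<Longrightarrow> fD (Some (lf i p), 0) = fP i (rel p)"
  unfolding fD_def using lf_odd lf_div lf_mod by simp
lemma fD_O: "fD (None, j) = j" unfolding fD_def by simp
lemma hD_P: "hD (Some (2 * i), p) = hP i (rel p)" unfolding hD_def by simp
lemma hD_L: "p < n \<Longrightarrow> hD (Some (lf i p), 0) = hP i (rel p) - 1"
  unfolding hD_def using lf_odd lf_div lf_mod by simp

lemma rel_suc_r: "rel (Suc r mod n) = Suc dl mod n" using rel_suc[OF r_lt] rel_r by simp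
lemma rel_suc_d: "rel (Suc d mod n) = 2" using rel_suc[OF d_lt] rel_d n3 by simp
lemma not_inner_dl: "\<not> inner dl" unfolding inner_def using dl2 by simp
lemma not_inner_1: "\<not> inner 1" unfolding inner_def using dl2 by simp
lemma not_inner_2: "\<not> inner 2" unfolding inner_def using dl2 by simp
lemma inner_sdl: "inner (Suc dl mod n)" unfolding inner_def using dln by (auto simp: mod_if)
lemma KK_gt: "2 * ((n - q) mod n) < KK" unfolding KK_def using n0 by simp

lemma NN: "(N + N - 1) mod N = N - 1"
proof -
  have e: "N + N - 1 = (N - 1) + N" using N1 by simp
  have "(N - 1 + N) mod N = (N - 1) mod N" by (rule mod_add_self2)
  also have "\<dots> = N - 1" using N1 by (intro mod_less) linarith
  finally show ?thesis using e by simp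
qed

lemma f_r: "i < M \<Longrightarrow> fD (phi (Some (2 * i), r)) = fD (Some (2 * i), r)"
proof -
  assume i: "i < M"
  have a: "fD (Some (2 * i), r) = (cnt (Suc i) + N - 1) mod N"
    unfolding fD_P rel_r fP_def G_def using not_inner_dl dl2 by (simp add: cnt_Suc)
  have b: "fD (phi (Some (2 * i), r)) = (cnt (Suc i mod M) + N - 1) mod N"
    unfolding phi_r fD_P rel_d fP_def G_def using not_inner_1 by simp
  show ?thesis
  proof (cases "Suc i < M")
    case True then show ?thesis using a b by simp
  next
    case False then have "Suc i = M" using i by simp
    then show ?thesis using a b cnt_M cnt_0 N1 NN by simp
  qed
qed

lemma h_r: "i < M \<Longrightarrow> hD (phi (Some (2 * i), r)) < hD (Some (2 * i), r)"
proof -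
  assume i: "i < M"
  let ?ex = "\<lambda>g. if g = N then M * KK else 0"
  have a: "hD (Some (2 * i), r) = (M - i) * KK + ?ex (cnt (Suc i))"
    unfolding hD_P rel_r hP_def G_def eP_def using not_inner_dl dl2 by (simp add: cnt_Suc)
  have ep: "eP j 1 \<le> dl" for j unfolding eP_def using dl2 by simp
  have t: "2 * (eP j 1 - 1) < KK" for j
  proof -
    have "eP j 1 - 1 \<le> eP j 1" by simp
    then have "eP j 1 - 1 < n" using ep[of j] dln by linarith
    then show ?thesis unfolding KK_def by simp
  qed
  have b: "hD (phi (Some (2 * i), r)) = (M - Suc i mod M) * KK + 2 * (eP (Suc i mod M) 1 - 1)
       + ?ex (cnt (Suc i mod M))"
    unfolding phi_r hD_P rel_d hP_def G_def using not_inner_1 by simp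
  show ?thesis
  proof (cases "Suc i < M")
    case True
    then have "M - i = Suc (M - Suc i)" by simp
    then show ?thesis using a b True t[of "Suc i"] by simp
  next
    case False then have "Suc i = M" using i by simp
    then have "M - i = 1" by simp
    then show ?thesis using a b cnt_M cnt_0 N1 t[of 0] \<open>Suc i = M\<close> by simp
  qed
qed

lemma f_l: "i < M \<Longrightarrow> fD (phi (Some (2 * i), l)) = fD (Some (2 * i), l)"
  unfolding phi_l fD_P rel_l rel_suc_r fP_def using inner_sdl by (simp add: inner_def)

lemma h_l: "0 < i \<Longrightarrow> i < M \<Longrightarrow> hD (phi (Some (2 * i), l)) < hD (Some (2 * i), l)"
proof -
  assume i: "0 < i" "i < M"
  have e: "i + M - 1 = (i - 1) + M" using i by simp
  have "(i - 1 + M) mod M = (i - 1) mod M" by (rule mod_add_self2)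
  also have "\<dots> = i - 1" using i by (intro mod_less) linarith
  finally have m: "(i + M - 1) mod M = i - 1" using e by simp
  have "hD (phi (Some (2 * i), l)) = (i - 1) * KK + 2 * ((n - Suc dl mod n) mod n)"
    unfolding phi_l hD_P rel_suc_r m hP_def using inner_sdl by simp
  also have "\<dots> < (i - 1) * KK + KK" using KK_gt by simp
  also have "\<dots> = i * KK" using i by (cases i) auto
  also have "\<dots> = hD (Some (2 * i), l)" unfolding hD_P rel_l hP_def by (simp add: inner_def)
  finally show ?thesis .
qed

lemma f_d: "dang i \<Longrightarrow> fD (phi (Some (2 * i), d)) = fD (Some (2 * i), d)"
  unfolding phi_d fD_O fD_P rel_d fP_def G_def using not_inner_1 cnt_dang by simp

lemma unused_q:
  assumes "p < n" "\<not> used i p"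
  shows "rel p \<noteq> 0" "rel p \<noteq> dl" "\<not> (rel p = 1 \<and> dang i)"
  using used_rel[OF assms(1), of i] assms(2) by auto

lemma f_u: "p < n \<Longrightarrow> \<not> used i p \<Longrightarrow> fD (phi (Some (2 * i), p)) = fD (Some (2 * i), p)"
  unfolding phi_u fD_L fD_P by (simp add: fD_L)

lemma hP_pos: assumes "p < n" "\<not> used i p" shows "1 \<le> hP i (rel p)"
proof -
  note u = unused_q[OF assms]
  have q: "rel p < n" by (rule rel_lt)
  show ?thesis
  proof (cases "inner (rel p)")
    case True then have "dl < rel p" using u unfolding inner_def by simp
    then show ?thesis unfolding hP_def using True q by simp
  next
    case False then have "rel p < dl" using u unfolding inner_def by simp
    moreover have "eP i (rel p) = dl" unfolding eP_def using u by auto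
    ultimately show ?thesis unfolding hP_def using False by simp
  qed
qed

lemma h_u: "p < n \<Longrightarrow> \<not> used i p \<Longrightarrow> hD (phi (Some (2 * i), p)) < hD (Some (2 * i), p)"
  unfolding phi_u hD_P by (simp add: hD_L) (use hP_pos in fastforce)

lemma f_L: assumes "p < n" "\<not> used i p"
  shows "fD (phi (Some (lf i p), 0)) = fD (Some (lf i p), 0)"
proof -
  note u = unused_q[OF assms]
  let ?q = "rel p"
  have q: "?q < n" by (rule rel_lt)
  have s: "rel (Suc p mod n) = Suc ?q mod n" by (rule rel_suc[OF assms(1)])
  have "fP i (Suc ?q mod n) = fP i ?q"
  proof (cases "inner ?q")
    case True then have "dl < ?q" using u unfolding inner_def by simp
    then have "inner (Suc ?q mod n)" unfolding inner_def using q by (auto simp: mod_if)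
    then show ?thesis unfolding fP_def using True by simp
  next
    case False then have lt: "?q < dl" "1 \<le> ?q" using u unfolding inner_def by auto
    then have sq: "Suc ?q mod n = Suc ?q" using dln by simp
    have "\<not> inner (Suc ?q)" unfolding inner_def using lt by simp
    moreover have "G i (Suc ?q) = G i ?q" unfolding G_def using lt u by auto
    ultimately show ?thesis unfolding fP_def sq using False by simp
  qed
  then show ?thesis unfolding phi_L[OF assms(1)] fD_P fD_L[OF assms(1)] s by simp
qed

lemma h_L: assumes "p < n" "\<not> used i p"
  shows "hD (phi (Some (lf i p), 0)) < hD (Some (lf i p), 0)"
proof -
  note u = unused_q[OF assms]
  let ?q = "rel p"
  have q: "?q < n" by (rule rel_lt)
  have s: "rel (Suc p mod n) = Suc ?q mod n" by (rule rel_suc[OF assms(1)])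
  have "hP i (Suc ?q mod n) + 2 \<le> hP i ?q"
  proof (cases "inner ?q")
    case True then have dq: "dl < ?q" using u unfolding inner_def by simp
    show ?thesis
    proof (cases "Suc ?q < n")
      case True
      then have "inner (Suc ?q mod n)" "Suc ?q mod n = Suc ?q" unfolding inner_def using dq by auto
      then show ?thesis unfolding hP_def using \<open>inner ?q\<close> True dq by simp
    next
      case False then have "Suc ?q = n" using q by simp
      then have "n - ?q = 1" by simp
      then show ?thesis unfolding hP_def using \<open>inner ?q\<close> \<open>Suc ?q = n\<close> n3 by (simp add: inner_def)
    qed
  next
    case False then have lt: "?q < dl" "1 \<le> ?q" using u unfolding inner_def by auto
    then have sq: "Suc ?q mod n = Suc ?q" using dln by simp
    have "\<not> inner (Suc ?q)" unfolding inner_def using lt by simp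
    moreover have "G i (Suc ?q) = G i ?q" unfolding G_def using lt u by auto
    moreover have "eP i (Suc ?q) = dl" "eP i ?q = dl" unfolding eP_def using lt u by auto
    ultimately show ?thesis unfolding hP_def sq using False lt by simp
  qed
  then show ?thesis unfolding phi_L[OF assms(1)] hD_P hD_L[OF assms(1)] s by simp
qed

lemma f_O: "j < N \<Longrightarrow> fD (phi (None, j)) = fD (None, j)"
  unfolding phi_O fD_P fD_O rel_suc_d fP_def G_def using not_inner_2 dang_apos cnt_apos by simp

end

lemma card_Un3:
  assumes "finite A" "finite B" "finite C" "A \<inter> B = {}" "A \<inter> C = {}" "B \<inter> C = {}"
  shows "card (A \<union> B \<union> C) = card A + card B + card C"
  using assms by (simp add: card_Un_disjoint Int_Un_distrib2)

context ring_sim begin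

definition "Rf = (\<lambda>j. (None, j)) ` {..<N} \<union> {(Some 0, l)}"
definition "LDs = (\<lambda>(i, p). (Some (lf i p), 0::nat)) ` {(i, p). i < M \<and> p < n \<and> \<not> used i p}"
definition "Rs = (\<lambda>i. (Some (2 * i), 0::nat)) ` {..<M} \<union> LDs \<union> {(None, 0)}"
definition "Ra = (\<lambda>i. (Some (2 * i), r)) ` {..<M} \<union> LDs \<union> (\<lambda>j. (None, j)) ` {..<N}"


lemma f_all: "x \<in> DD \<Longrightarrow> fD (phi x) = fD x"
proof (erule D_cases)
  fix i p assume x: "x = (Some (2 * i), p)" "i < M" "p < n"
  show "fD (phi x) = fD x"
  proof (cases "used i p")
    case True
    then consider "p = r" | "p = l" | "p = d \<and> dang i" unfolding used_def by blast
    then show ?thesis using x f_r f_l f_d by cases auto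
  next
    case False then show ?thesis using x f_u by auto
  qed
next
  fix i p assume "x = (Some (lf i p), 0)" "i < M" "p < n" "\<not> used i p"
  then show "fD (phi x) = fD x" using f_L[of p i] by simp
next
  fix j assume "x = (None, j)" "j < N"
  then show "fD (phi x) = fD x" using f_O[of j] by simp
qed

lemma h_all: "x \<in> DD \<Longrightarrow> x \<notin> Rf \<Longrightarrow> phi x \<in> Rf \<or> hD (phi x) < hD x"
proof (erule D_cases)
  fix i p assume x: "x = (Some (2 * i), p)" "i < M" "p < n" and nr: "x \<notin> Rf"
  show ?thesis
  proof (cases "used i p")
    case True
    then consider "p = r" | "p = l" | "p = d \<and> dang i" unfolding used_def by blast
    then show ?thesis
    proof cases
      case 1 then show ?thesis using x h_r by auto
    next
      case 2
      then have "i \<noteq> 0" using nr x unfolding Rf_def by auto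
      then show ?thesis using x h_l 2 by auto
    next
      case 3
      have "(i div 2 + N - 1) mod N < N" using N1 by simp
      then show ?thesis using x 3 phi_d unfolding Rf_def by auto
    qed
  next
    case False then show ?thesis using x h_u by auto
  qed
next
  fix i p assume "x = (Some (lf i p), 0)" "i < M" "p < n" "\<not> used i p"
  then show ?thesis using h_L by auto
next
  fix j assume "x = (None, j)" "j < N" "x \<notin> Rf"
  then show ?thesis unfolding Rf_def by auto
qed

lemma Rf_sub: "Rf \<subseteq> DD" unfolding Rf_def using OinD PinD[of 0 l] ll M_pos by auto

lemma fD_inj: "inj_on fD Rf"
proof -
  have "fD (Some 0, l) = N" using fD_P[of 0 l] rel_l unfolding fP_def inner_def by simp
  then show ?thesis unfolding Rf_def inj_on_def by (auto simp: fD_O)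
qed

lemma card_Rf: "card Rf = N + 1"
proof -
  let ?A = "(\<lambda>j. (None, j)) ` {..<N}"
  have c: "card ?A = N" by (simp add: card_image inj_on_def)
  have e: "Rf = insert (Some 0, l) ?A" unfolding Rf_def by auto
  have "(Some 0, l) \<notin> ?A" by auto
  then show ?thesis unfolding e using c by (subst card_insert_disjoint) auto
qed

lemma reach_f: "\<forall>x\<in>DD. \<exists>k. (phi ^^ k) x \<in> Rf"
  by (rule reach_by_rank[where h = hD]) (use phi_maps h_all in auto)

lemma orbits_phi: "num_orbits phi DD = N + 1"
  using num_orbits_reps[OF finite_D _ phi_inj Rf_sub _ fD_inj reach_f] phi_maps f_all card_Rf
  by auto

lemma finite_LDs: "finite LDs"
proof -
  have "{(i, p). i < M \<and> p < n \<and> \<not> used i p} \<subseteq> {..<M} \<times> {..<n}" by auto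
  then have "finite {(i, p). i < M \<and> p < n \<and> \<not> used i p}" by (rule finite_subset) auto
  then show ?thesis unfolding LDs_def by simp
qed

lemma LDs_E: assumes "x \<in> LDs"
  obtains i p where "x = (Some (lf i p), 0)" "i < M" "p < n" "\<not> used i p"
  using assms unfolding LDs_def by auto

lemma LDs_sub: "LDs \<subseteq> DD" unfolding LDs_def using LinD by auto

lemma lf_ne: "lf i p \<noteq> 2 * j" using lf_odd[of i p] by auto
lemma lf_ne': "2 * j \<noteq> lf i p" using lf_ne by metis

lemma Rs_sub: "Rs \<subseteq> DD" unfolding Rs_def using PinD n0 LDs_sub OinD N1 by auto

lemma fst_sig: "fst (sig x) = fst x" unfolding rot_def by (auto split: prod.splits option.splits)

lemma inj_lf: "inj_on (\<lambda>(i, p). (Some (lf i p), 0::nat)) {(i, p). i < M \<and> p < n \<and> \<not> used i p}"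
  unfolding inj_on_def using lf_inj by auto

lemma fst_inj_Rs: "inj_on fst Rs"
proof -
  have "\<forall>x\<in>Rs. snd x = 0" unfolding Rs_def LDs_def by auto
  then show ?thesis unfolding inj_on_def by (metis prod_eq_iff)
qed

lemma reach_s: "\<forall>x\<in>DD. \<exists>k. (sig ^^ k) x \<in> Rs"
proof (rule reach_by_rank[where h = "\<lambda>x. case x of (None, j) \<Rightarrow> j | (Some v, p) \<Rightarrow> if even v then n - p else 0"])
  show "\<forall>x\<in>DD. sig x \<in> DD" using sig_maps by auto
  show "\<forall>x\<in>DD. x \<notin> Rs \<longrightarrow> sig x \<in> Rs \<or>
     (case sig x of (None, j) \<Rightarrow> j | (Some v, p) \<Rightarrow> if even v then n - p else 0)
     < (case x of (None, j) \<Rightarrow> j | (Some v, p) \<Rightarrow> if even v then n - p else 0)"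
  proof (intro ballI impI)
    fix x assume x: "x \<in> DD" "x \<notin> Rs"
    from x(1) show "sig x \<in> Rs \<or>
     (case sig x of (None, j) \<Rightarrow> j | (Some v, p) \<Rightarrow> if even v then n - p else 0)
     < (case x of (None, j) \<Rightarrow> j | (Some v, p) \<Rightarrow> if even v then n - p else 0)"
    proof (cases rule: D_cases)
      case (P i p)
      then have "p \<noteq> 0" using x(2) unfolding Rs_def by auto
      show ?thesis
      proof (cases "Suc p = n")
        case True then show ?thesis using P unfolding Rs_def by (simp add: sig_P)
      next
        case False
        then have "n - Suc p < n - p" using P by linarith
        then show ?thesis using P False by (simp add: sig_P)
      qed
    next
      case (L i p) then show ?thesis using x(2) unfolding Rs_def LDs_def by auto
    next
      case (O j)
      then have "j \<noteq> 0" using x(2) unfolding Rs_def by auto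
      then have e: "(j + N - 1) mod N = j - 1" using O by (simp add: mod_if)
      show ?thesis
      proof (cases "j = 1")
        case True then show ?thesis using O e unfolding Rs_def by (simp add: sig_O)
      next
        case False then show ?thesis using O e \<open>j \<noteq> 0\<close> by (simp add: sig_O)
      qed
    qed
  qed
qed

lemma card_Rs: "card Rs = M + card LDs + 1"
proof -
  let ?A = "(\<lambda>i. (Some (2 * i), 0::nat)) ` {..<M}"
  have cA: "card ?A = M" by (simp add: card_image inj_on_def)
  have d1: "?A \<inter> LDs = {}" unfolding LDs_def using lf_ne' by auto
  have d2: "?A \<inter> {(None, 0)} = {}" by auto
  have d3: "LDs \<inter> {(None, 0)} = {}" unfolding LDs_def by auto
  have "card (?A \<union> LDs \<union> {(None, 0)}) = card ?A + card LDs + card {(None, 0::nat)}"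
    using card_Un3[OF _ finite_LDs _ d1 d2 d3] by simp
  then show ?thesis unfolding Rs_def using cA by simp
qed

lemma orbits_sig: "num_orbits sig DD = M + card LDs + 1"
  using num_orbits_reps[OF finite_D _ sig_inj Rs_sub _ fst_inj_Rs reach_s] sig_maps fst_sig card_Rs
  by auto

lemma Ra_sub: "Ra \<subseteq> DD" unfolding Ra_def using PinD r_lt LDs_sub OinD by auto

lemma mem_Ra_P: "(Some (2 * k), q) \<in> Ra \<Longrightarrow> q = r"
  unfolding Ra_def LDs_def using lf_ne' by auto

lemma alpha_notin_Ra: assumes bR: "b \<in> Ra" shows "alpha b \<notin> Ra"
proof -
  have "\<exists>k q. alpha b = (Some (2 * k), q) \<and> q \<noteq> r"
  proof -
    consider (a) i where "b = (Some (2 * i), r)" | (b) i p where "b = (Some (lf i p), 0)" "p < n" "\<not> used i p"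
      | (c) j where "b = (None, j)"
    proof -
      have "b \<in> (\<lambda>i. (Some (2 * i), r)) ` {..<M} \<or> b \<in> LDs \<or> b \<in> (\<lambda>j. (None, j)) ` {..<N}"
        using bR unfolding Ra_def by blast
      then show ?thesis using that by (auto elim!: LDs_E)
    qed
    then show ?thesis
    proof cases
      case a then show ?thesis using alpha_P_r l_ne_r by auto
    next
      case b then show ?thesis using alpha_L used_r by auto
    next
      case c then show ?thesis using alpha_O d_ne_r by auto
    qed
  qed
  then obtain k q where "alpha b = (Some (2 * k), q)" "q \<noteq> r" by blast
  then show ?thesis using mem_Ra_P[of k q] by auto
qed

lemma inj_pair_Ra: "inj_on (\<lambda>x. {x, alpha x}) Ra"
proof (rule inj_onI)
  fix a b assume ab: "a \<in> Ra" "b \<in> Ra" "{a, alpha a} = {b, alpha b}"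
  then have "a = b \<or> a = alpha b" by (metis doubleton_eq_iff)
  then show "a = b"
  proof
    assume "a = alpha b" then have False using alpha_notin_Ra[OF ab(2)] ab(1) by simp
    then show ?thesis ..
  qed
qed

lemma reach_a: "\<forall>x\<in>DD. \<exists>k. (alpha ^^ k) x \<in> Ra"
proof (rule reach_by_rank[where h = "\<lambda>x. 0"])
  show "\<forall>x\<in>DD. alpha x \<in> DD" using alpha_maps by auto
  show "\<forall>x\<in>DD. x \<notin> Ra \<longrightarrow> alpha x \<in> Ra \<or> (0::nat) < 0"
  proof (intro ballI impI)
    fix x assume x: "x \<in> DD" "x \<notin> Ra"
    from x(1) show "alpha x \<in> Ra \<or> (0::nat) < 0"
    proof (cases rule: D_cases)
      case (P i p)
      then have "p \<noteq> r" using x(2) unfolding Ra_def by auto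
      show ?thesis
      proof (cases "used i p")
        case True
        then have "p = l \<or> (p = d \<and> dang i)" using \<open>p \<noteq> r\<close> unfolding used_def by auto
        then show ?thesis
        proof
          assume "p = l" then show ?thesis using P alpha_P_l modM_lt unfolding Ra_def by auto
        next
          assume "p = d \<and> dang i" then show ?thesis using P alpha_P_d div2_lt unfolding Ra_def by auto
        qed
      next
        case False then show ?thesis using P alpha_P_u unfolding Ra_def LDs_def by auto
      qed
    next
      case (L i p) then show ?thesis using x(2) unfolding Ra_def LDs_def by auto
    next
      case (O j) then show ?thesis using x(2) unfolding Ra_def by auto
    qed
  qed
qed

lemma card_Ra: "card Ra = M + card LDs + N"
proof -
  let ?A = "(\<lambda>i. (Some (2 * i), r)) ` {..<M}"
  let ?C = "(\<lambda>j. (None :: nat option, j)) ` {..<N}"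
  have cA: "card ?A = M" by (simp add: card_image inj_on_def)
  have cC: "card ?C = N" by (simp add: card_image inj_on_def)
  have d1: "?A \<inter> LDs = {}" unfolding LDs_def using lf_ne' by auto
  have d2: "?A \<inter> ?C = {}" by auto
  have d3: "LDs \<inter> ?C = {}" unfolding LDs_def by auto
  have "card (?A \<union> LDs \<union> ?C) = card ?A + card LDs + card ?C"
    using card_Un3[OF _ finite_LDs _ d1 d2 d3] by simp
  then show ?thesis unfolding Ra_def using cA cC by simp
qed

lemma orbits_alpha: "num_orbits alpha DD = M + card LDs + N"
proof -
  have "\<forall>x\<in>DD. {alpha x, alpha (alpha x)} = {x, alpha x}" using alpha_props by auto
  then show ?thesis
    using num_orbits_reps[OF finite_D _ alpha_inj Ra_sub _ inj_pair_Ra reach_a] alpha_maps card_Ra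
    by auto
qed

end

context ring_sim begin

abbreviation "relC \<equiv> {(x, sig x) | x. x \<in> DD} \<union> {(x, alpha x) | x. x \<in> DD}
        \<union> {(sig x, x) | x. x \<in> DD} \<union> {(alpha x, x) | x. x \<in> DD}"

lemma in_relC_sig: "x \<in> DD \<Longrightarrow> (x, sig x) \<in> relC"
  by (cases x) blast
lemma in_relC_alpha: "x \<in> DD \<Longrightarrow> (x, alpha x) \<in> relC"
  by (cases x) blast

lemma step_phi: "x \<in> DD \<Longrightarrow> (x, phi x) \<in> relC\<^sup>*"
proof -
  assume x: "x \<in> DD"
  have 1: "(x, alpha x) \<in> relC" using x by (rule in_relC_alpha)
  have 2: "(alpha x, sig (alpha x)) \<in> relC" using alpha_maps[OF x] by (rule in_relC_sig)
  have "(x, sig (alpha x)) \<in> relC\<^sup>*" using 1 2 by (meson r_into_rtrancl rtrancl_into_rtrancl)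
  then show ?thesis by simp
qed

lemma phi_Suc: "(phi ^^ Suc k) x = phi ((phi ^^ k) x)" by simp

lemma steps_phi: "x \<in> DD \<Longrightarrow> (x, (phi ^^ k) x) \<in> relC\<^sup>*"
proof (induction k)
  case 0 then show ?case by simp
next
  case (Suc k)
  have "(phi ^^ k) x \<in> DD" using funpow_in[of DD phi x k] phi_maps Suc.prems by blast
  then have "((phi ^^ k) x, phi ((phi ^^ k) x)) \<in> relC\<^sup>*" by (rule step_phi)
  then have "(x, phi ((phi ^^ k) x)) \<in> relC\<^sup>*" using Suc.IH[OF Suc.prems] by (rule rtrancl_trans[rotated])
  then show ?case unfolding phi_Suc .
qed

lemma O_conn: "j < N \<Longrightarrow> ((None, j), (None, 0)) \<in> relC\<^sup>*"
proof (induction j)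
  case 0 then show ?case by simp
next
  case (Suc j)
  have e: "Suc j + N - 1 = j + N" by simp
  have s: "sig (None, Suc j) = (None, j)" unfolding sig_O e using Suc.prems by simp
  have "(None, Suc j) \<in> DD" using Suc.prems by (rule OinD)
  then have "((None, Suc j), sig (None, Suc j)) \<in> relC" by (rule in_relC_sig)
  then have 1: "((None, Suc j), (None, j)) \<in> relC" unfolding s .
  have 2: "((None, j), (None, 0)) \<in> relC\<^sup>*" using Suc by simp
  show ?case by (rule converse_rtrancl_into_rtrancl[OF 1 2])
qed

lemma fD_iter: "x \<in> DD \<Longrightarrow> fD ((phi ^^ k) x) = fD x"
proof (induction k)
  case 0 then show ?case by simp
next
  case (Suc k)
  have "(phi ^^ k) x \<in> DD" using funpow_in[of DD phi x k] phi_maps Suc.prems by blast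
  then have a: "fD (phi ((phi ^^ k) x)) = fD ((phi ^^ k) x)" by (rule f_all)
  show ?case unfolding phi_Suc a by (rule Suc.IH[OF Suc.prems])
qed

lemma rep_None: "x \<in> DD \<Longrightarrow> fD x \<noteq> N \<Longrightarrow> \<exists>k j. (phi ^^ k) x = (None, j) \<and> j < N"
proof -
  assume x: "x \<in> DD" and f: "fD x \<noteq> N"
  obtain k where k: "(phi ^^ k) x \<in> Rf" using reach_f x by blast
  have "fD ((phi ^^ k) x) \<noteq> N" using fD_iter[OF x] f by simp
  moreover have "fD (Some 0, l) = N" using fD_P[of 0 l] rel_l unfolding fP_def inner_def by simp
  ultimately have "(phi ^^ k) x \<noteq> (Some 0, l)" by auto
  then show ?thesis using k unfolding Rf_def by auto
qed

lemma conn: "x \<in> DD \<Longrightarrow> (x, (None, 0)) \<in> relC\<^sup>*"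
proof -
  assume x: "x \<in> DD"
  obtain k where k: "(phi ^^ k) x \<in> Rf" using reach_f x by blast
  have xk: "(x, (phi ^^ k) x) \<in> relC\<^sup>*" by (rule steps_phi[OF x])
  have "((phi ^^ k) x, (None, 0)) \<in> relC\<^sup>*"
  proof (cases "(phi ^^ k) x = (Some 0, l)")
    case True
    have s: "sig (Some 0, l) = (Some 0, d)" using sig_P[of 0 l] Suc_l by simp
    have l0: "(Some 0, l) \<in> DD" using PinD[of 0 l] M_pos ll by simp
    have d0: "(Some 0, d) \<in> DD" using PinD[of 0 d] M_pos d_lt by simp
    have "((Some 0, l), sig (Some 0, l)) \<in> relC" using l0 by (rule in_relC_sig)
    then have 1: "((Some 0, l), (Some 0, d)) \<in> relC" unfolding s .
    have "fD (Some 0, d) = N - 1" using fD_P[of 0 d] rel_d not_inner_1 cnt_0 N1 unfolding fP_def G_def by simp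
    then have "fD (Some 0, d) \<noteq> N" using N1 by simp
    then obtain k' j where kj: "(phi ^^ k') (Some 0, d) = (None, j)" "j < N" using rep_None[OF d0] by blast
    have 2: "((Some 0, d), (None, j)) \<in> relC\<^sup>*" using steps_phi[OF d0, of k'] unfolding kj(1) .
    have 3: "((Some 0, d), (None, 0)) \<in> relC\<^sup>*" using 2 O_conn[OF kj(2)] by (rule rtrancl_trans)
    show ?thesis unfolding True by (rule converse_rtrancl_into_rtrancl[OF 1 3])
  next
    case False
    then obtain j where "(phi ^^ k) x = (None, j)" "j < N" using k unfolding Rf_def by auto
    then show ?thesis using O_conn by simp
  qed
  then show ?thesis using xk by (rule rtrancl_trans[rotated])
qed

lemma comps: "num_components sig alpha DD = 1"
proof -
  have "0 < N" using N1 by simp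
  then show ?thesis by (rule num_components_one[OF OinD]) (use conn in auto)
qed

lemma planar: "planar_sim Vs lab N alpha"
  unfolding planar_sim_def Let_def using orbits_phi orbits_sig orbits_alpha comps by simp

definition "inP t i p \<longleftrightarrow> ((t \<noteq> odd i) \<longleftrightarrow> p \<in> X)"
definition "Ht t = {(Some (2 * i), p) | i p. i < M \<and> p < n \<and> inP t i p}
   \<union> {(Some (lf i p), 0) | i p. i < M \<and> p < n \<and> \<not> used i p \<and> \<not> inP t i p}
   \<union> {(None, j) | j. j < N \<and> \<not> inP t (apos j) d}"

lemma Ht_mem: "x \<in> Ht t \<longleftrightarrow> (\<exists>i p. x = (Some (2 * i), p) \<and> i < M \<and> p < n \<and> inP t i p)
   \<or> (\<exists>i p. x = (Some (lf i p), 0) \<and> i < M \<and> p < n \<and> \<not> used i p \<and> \<not> inP t i p)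
   \<or> (\<exists>j. x = (None, j) \<and> j < N \<and> \<not> inP t (apos j) d)"
  unfolding Ht_def by blast

lemma Ht_P: assumes "i < M" "p < n" shows "(Some (2 * i), p) \<in> Ht t \<longleftrightarrow> inP t i p"
proof -
  have "\<not> (\<exists>i' p'. (Some (2 * i), p) = (Some (lf i' p'), 0::nat))" using lf_ne' by simp
  then show ?thesis unfolding Ht_mem using assms by auto
qed

lemma Ht_L: assumes "i < M" "p < n" shows "(Some (lf i p), 0) \<in> Ht t \<longleftrightarrow> \<not> inP t i p \<and> \<not> used i p"
proof -
  have "\<not> (\<exists>i' p'. (Some (lf i p), 0::nat) = (Some (2 * i'), p'))" using lf_ne by simp
  moreover have "(\<exists>i' p'. (Some (lf i p), 0::nat) = (Some (lf i' p'), 0) \<and> i' < M \<and> p' < n \<and> \<not> used i' p' \<and> \<not> inP t i' p')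
     \<longleftrightarrow> \<not> inP t i p \<and> \<not> used i p"
    using lf_inj assms by auto
  ultimately show ?thesis unfolding Ht_mem by auto
qed

lemma Ht_O: "(None, j) \<in> Ht t \<longleftrightarrow> j < N \<and> \<not> inP t (apos j) d"
  unfolding Ht_mem by auto

lemma Ht_sub: "Ht t \<subseteq> DD"
proof
  fix x assume "x \<in> Ht t"
  then show "x \<in> DD" unfolding Ht_mem using PinD LinD OinD by auto
qed

lemma odd_sucM: assumes "i < M" shows "odd (Suc i mod M) \<longleftrightarrow> \<not> odd i"
proof (cases "Suc i = M")
  case True
  then have "even (Suc i)" using M_even by simp
  then have "odd i" by simp
  then show ?thesis using True by simp
next
  case False then show ?thesis using assms by simp
qed
lemma odd_predM: "i < M \<Longrightarrow> odd ((i + M - 1) mod M) \<longleftrightarrow> \<not> odd i"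
proof (cases "i = 0")
  case True
  then have "(i + M - 1) mod M = M - 1" using M_pos by simp
  then show ?thesis using True M_even M_pos by simp
next
  case False
  assume i: "i < M"
  have e: "i + M - 1 = (i - 1) + M" using False by simp
  have "(i - 1 + M) mod M = (i - 1) mod M" by (rule mod_add_self2)
  also have "\<dots> = i - 1" using i by (intro mod_less) linarith
  finally have "(i + M - 1) mod M = i - 1" using e by simp
  then show ?thesis using False by (cases i) auto
qed

lemma Ht_edge: assumes x: "x \<in> DD" shows "x \<in> Ht t \<longleftrightarrow> alpha x \<notin> Ht t"
  using x
proof (cases rule: D_cases)
  case (P i p)
  show ?thesis
  proof (cases "used i p")
    case True
    then consider "p = r" | "p = l" | "p = d \<and> dang i" unfolding used_def by blast
    then show ?thesis
    proof cases
      case 1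
      have a: "alpha x = (Some (2 * (Suc i mod M)), l)" using P 1 alpha_P_r by simp
      have b: "x \<in> Ht t \<longleftrightarrow> inP t i r" using Ht_P[OF P(2) r_lt] P 1 by simp
      have c: "alpha x \<in> Ht t \<longleftrightarrow> inP t (Suc i mod M) l" using Ht_P[OF modM_lt ll] a by simp
      have "inP t (Suc i mod M) l \<longleftrightarrow> \<not> inP t i r" using odd_sucM[OF P(2)] lr' unfolding inP_def by auto
      then show ?thesis using b c by simp
    next
      case 2
      have a: "alpha x = (Some (2 * ((i + M - 1) mod M)), r)" using P 2 alpha_P_l by simp
      have b: "x \<in> Ht t \<longleftrightarrow> inP t i l" using Ht_P[OF P(2) ll] P 2 by simp
      have c: "alpha x \<in> Ht t \<longleftrightarrow> inP t ((i + M - 1) mod M) r" using Ht_P[OF modM_lt r_lt] a by simp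
      have "inP t ((i + M - 1) mod M) r \<longleftrightarrow> \<not> inP t i l" using odd_predM[OF P(2)] lr' unfolding inP_def by auto
      then show ?thesis using b c by simp
    next
      case 3
      then show ?thesis using P alpha_P_d Ht_P Ht_O apos_dang div2_lt by auto
    qed
  next
    case False then show ?thesis using P alpha_P_u Ht_P Ht_L by auto
  qed
next
  case (L i p) then show ?thesis using alpha_L Ht_P Ht_L by auto
next
  case (O j) then show ?thesis using alpha_O Ht_P Ht_O apos_lt d_lt by auto
qed

lemma Vs_cases:
  assumes "v \<in> Vs"
  obtains (P) i where "v = 2 * i" "i < M" | (L) i p where "v = lf i p" "i < M" "p < n" "\<not> used i p"
  using assms unfolding Vs_def by auto

lemma Ht_sat: "sat_assignment Vs lab N alpha (Ht t)"
  unfolding sat_assignment_def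
proof (intro conjI ballI)
  show "Ht t \<subseteq> DD" by (rule Ht_sub)
  fix x assume "x \<in> DD" then show "x \<in> Ht t \<longleftrightarrow> alpha x \<notin> Ht t" by (rule Ht_edge)
next
  fix v assume "v \<in> Vs"
  then show "{i. i < nports (lab v) \<and> (Some v, i) \<in> Ht t} \<in> constr (lab v)"
  proof (cases rule: Vs_cases)
    case (P i)
    have "{k. k < n \<and> (Some (2 * i), k) \<in> Ht t} = (if t \<noteq> odd i then X else {..<n} - X)"
      using Ht_P[OF P(2)] Xsub unfolding inP_def by auto
    then show ?thesis using P by (simp add: constr_Fg)
  next
    case (L i p)
    have "{k. k < 1 \<and> (Some (lf i p), k) \<in> Ht t} \<subseteq> {0}" by auto
    then have "{k. k < 1 \<and> (Some (lf i p), k) \<in> Ht t} = {} \<or> {k. k < 1 \<and> (Some (lf i p), k) \<in> Ht t} = {0}"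
      by blast
    then show ?thesis using L by (auto simp: constr_ft)
  qed
qed

lemma XneC: "X \<noteq> {..<n} - X"
proof
  assume "X = {..<n} - X"
  then have "0 \<in> X \<longleftrightarrow> 0 \<notin> X" using n0 by blast
  then show False by simp
qed

lemma sat_unique:
  assumes sat: "sat_assignment Vs lab N alpha H"
  shows "\<exists>t. H = Ht t"
proof -
  have Hs: "H \<subseteq> DD" and edge: "\<forall>x\<in>DD. x \<in> H \<longleftrightarrow> alpha x \<notin> H"
    and vc: "\<forall>v\<in>Vs. {i. i < nports (lab v) \<and> (Some v, i) \<in> H} \<in> constr (lab v)"
    using sat unfolding sat_assignment_def by auto
  define S where "S i = {k. k < n \<and> (Some (2 * i), k) \<in> H}" for i
  define b where "b i \<longleftrightarrow> S i = X" for i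
  have SC: "S i \<in> {X, {..<n} - X}" if "i < M" for i
  proof -
    have "2 * i \<in> Vs" unfolding Vs_def using that by auto
    then have "{k. k < nports (lab (2 * i)) \<and> (Some (2 * i), k) \<in> H} \<in> constr (lab (2 * i))"
      using vc by blast
    then show ?thesis unfolding S_def by (simp add: constr_Fg)
  qed
  have memP: "(Some (2 * i), k) \<in> H \<longleftrightarrow> (b i \<longleftrightarrow> k \<in> X)" if "i < M" "k < n" for i k
  proof (cases "b i")
    case True then have "S i = X" unfolding b_def by simp
    then show ?thesis using True that unfolding S_def by auto
  next
    case False then have "S i = {..<n} - X" using SC[OF that(1)] unfolding b_def by auto
    then show ?thesis using False that unfolding S_def by auto
  qed
  have ring: "b (Suc i) \<longleftrightarrow> \<not> b i" if "Suc i < M" for i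
  proof -
    have x: "(Some (2 * i), r) \<in> DD" using PinD that r_lt by simp
    have "alpha (Some (2 * i), r) = (Some (2 * Suc i), l)" using alpha_P_r that by simp
    then have "(Some (2 * i), r) \<in> H \<longleftrightarrow> (Some (2 * Suc i), l) \<notin> H" using edge x by simp
    then show ?thesis using memP[of i r] memP[of "Suc i" l] that r_lt ll lr' by auto
  qed
  have par: "b i \<longleftrightarrow> (b 0 \<noteq> odd i)" if "i < M" for i
    using that by (induction i) (auto simp: ring)
  have memP': "(Some (2 * i), k) \<in> H \<longleftrightarrow> inP (b 0) i k" if "i < M" "k < n" for i k
    using memP[OF that] par[OF that(1)] unfolding inP_def by auto
  have "H = Ht (b 0)"
  proof (rule set_eqI)
    fix x show "x \<in> H \<longleftrightarrow> x \<in> Ht (b 0)"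
    proof (cases "x \<in> DD")
      case False then show ?thesis using Hs Ht_sub by blast
    next
      case True
      then show ?thesis
      proof (cases rule: D_cases)
        case (P i p) then show ?thesis using memP' Ht_P by auto
      next
        case (L i p)
        then have "x \<in> H \<longleftrightarrow> (Some (2 * i), p) \<notin> H" using edge True alpha_L by auto
        then show ?thesis using L memP' Ht_L by auto
      next
        case (O j)
        then have "x \<in> H \<longleftrightarrow> (Some (2 * apos j), d) \<notin> H" using edge True alpha_O by auto
        then show ?thesis using O memP'[of "apos j" d] Ht_O apos_lt d_lt by auto
      qed
    qed
  qed
  then show ?thesis by blast
qed

lemma inward_Ht: "inward N (Ht t) = {j. j < N \<and> ((t \<noteq> (j \<in> Y)) \<longleftrightarrow> d \<in> X)}"
  unfolding inward_def using Ht_O apos_odd unfolding inP_def by auto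

lemma inward_vals: "{inward N (Ht t) | t. True} = {Y, {..<N} - Y}"
proof -
  have a: "inward N (Ht (d \<notin> X)) = Y" unfolding inward_Ht using Ysub by auto
  have b: "inward N (Ht (d \<in> X)) = {..<N} - Y" unfolding inward_Ht by auto
  have "inward N (Ht t) \<in> {Y, {..<N} - Y}" for t using a b by (cases "t = (d \<in> X)") auto
  then show ?thesis using a b by blast
qed

lemma sim_gadget: "simulated_gadget Vs lab N alpha = (N, {Y, {..<N} - Y})"
proof -
  have "{inward N H | H. sat_assignment Vs lab N alpha H} = {inward N (Ht t) | t. True}"
    using sat_unique Ht_sat by blast
  then show ?thesis unfolding simulated_gadget_def inward_vals by simp
qed

lemma inward_inj: "inward N (Ht t1) = inward N (Ht t2) \<Longrightarrow> t1 = t2"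
proof -
  assume e: "inward N (Ht t1) = inward N (Ht t2)"
  have "0 < N" using N1 by simp
  then have "(0 \<in> inward N (Ht t1)) = (0 \<in> inward N (Ht t2))" using e by simp
  then show ?thesis unfolding inward_Ht using \<open>0 < N\<close> by auto
qed

lemma parsim: "parsimonious Vs lab N alpha"
  unfolding parsimonious_def
proof
  fix Z assume "Z \<in> constr (simulated_gadget Vs lab N alpha)"
  then obtain H where H: "sat_assignment Vs lab N alpha H" "inward N H = Z"
    unfolding simulated_gadget_def constr_def by auto
  show "\<exists>!H. sat_assignment Vs lab N alpha H \<and> inward N H = Z"
  proof (rule ex1I[of _ H])
    show "sat_assignment Vs lab N alpha H \<and> inward N H = Z" using H by simp
    fix H' assume H': "sat_assignment Vs lab N alpha H' \<and> inward N H' = Z"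
    obtain t where t: "H = Ht t" using sat_unique H(1) by blast
    obtain t' where t': "H' = Ht t'" using sat_unique H' by blast
    have "t' = t" using inward_inj H H' t t' by metis
    then show "H' = H" using t t' by simp
  qed
qed

lemma iso_self: assumes A: "\<forall>Z\<in>A. Z \<subseteq> {..<k}" shows "gadget_iso (k, A) (k, A)"
proof -
  have img: "(\<lambda>i. (i + 0) mod k) ` Z = Z" if Z: "Z \<in> A" for Z
  proof -
    have sub: "Z \<subseteq> {..<k}" using A Z by (rule bspec)
    have "(\<lambda>i. (i + 0) mod k) ` Z = (\<lambda>i. i) ` Z"
    proof (rule image_cong[OF refl])
      fix x assume "x \<in> Z"
      then have "x < k" using sub by (simp add: subset_iff)
      then show "(x + 0) mod k = x" by simp
    qed
    then show ?thesis by simp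
  qed
  have "(\<lambda>Z. (\<lambda>i. (i + 0) mod k) ` Z) ` A = (\<lambda>Z. Z) ` A"
    by (rule image_cong[OF refl]) (rule img)
  then have e: "A = (\<lambda>Z. (\<lambda>i. (i + 0) mod k) ` Z) ` A" by simp
  have "\<exists>r. A = (\<lambda>Z. (\<lambda>i. (i + r) mod k) ` Z) ` A" by (rule exI[of _ 0]) (rule e)
  then show ?thesis unfolding gadget_iso_def nports_def constr_def fst_conv snd_conv by simp
qed

theorem ring_simulates: "planar_pars_simulates {Fg, free_terminal} (N, {Y, {..<N} - Y})"
  unfolding planar_pars_simulates_def
proof (intro exI conjI)
  show "is_simulation {Fg, free_terminal} Vs lab N alpha" by (rule is_sim)
  show "planar_sim Vs lab N alpha" by (rule planar)
  show "parsimonious Vs lab N alpha" by (rule parsim)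
  show "gadget_iso (simulated_gadget Vs lab N alpha) (N, {Y, {..<N} - Y})"
    unfolding sim_gadget using Ysub by (intro iso_self) auto
qed

end

lemma gen_sim:
  assumes F: "generalized_fanout F" and N1: "1 \<le> N" and Ysub: "Y \<subseteq> {..<N}"
  shows "planar_pars_simulates {F, free_terminal} (N, {Y, {..<N} - Y})"
proof -
  obtain X where n3: "3 \<le> nports F" and Xsub: "X \<subseteq> {..<nports F}"
    and cF: "constr F = {X, {..<nports F} - X}"
    using F unfolding generalized_fanout_def by blast
  define n where "n = nports F"
  have Feq: "F = (n, {X, {..<n} - X})" using cF unfolding n_def nports_def constr_def by (simp add: prod_eq_iff)
  have n3': "3 \<le> n" using n3 n_def by simp
  have Xsub': "X \<subseteq> {..<n}" using Xsub n_def by simp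
  have "\<exists>l dl. l < n \<and> 2 \<le> dl \<and> dl < n \<and> (l \<in> X \<longleftrightarrow> (l + dl) mod n \<in> X)"
  proof (cases "(0::nat) \<in> X \<longleftrightarrow> (2::nat) \<in> X")
    case True
    have e: "(0 + 2) mod n = 2" using n3' by simp
    have "0 < n \<and> 2 \<le> (2::nat) \<and> 2 < n \<and> (0 \<in> X \<longleftrightarrow> (0 + 2) mod n \<in> X)"
      unfolding e using n3' True by simp
    then show ?thesis by blast
  next
    case c1: False
    show ?thesis
    proof (cases "(0::nat) \<in> X \<longleftrightarrow> (1::nat) \<in> X")
      case True
      have "(1 + (n - 1)) mod n = 0" using n3' by simp
      then have "1 < n \<and> 2 \<le> n - 1 \<and> n - 1 < n \<and> (1 \<in> X \<longleftrightarrow> (1 + (n - 1)) mod n \<in> X)"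
        using n3' True by simp
      then show ?thesis by blast
    next
      case False
      then have c2: "(1::nat) \<in> X \<longleftrightarrow> (2::nat) \<in> X" using c1 by blast
      have "2 + (n - 1) = 1 + n" using n3' by simp
      then have "(2 + (n - 1)) mod n = 1" using n3' by (simp add: mod_Suc)
      then have "2 < n \<and> 2 \<le> n - 1 \<and> n - 1 < n \<and> (2 \<in> X \<longleftrightarrow> (2 + (n - 1)) mod n \<in> X)"
        using n3' c2 by simp
      then show ?thesis by blast
    qed
  qed
  then obtain l dl where ld: "l < n" "2 \<le> dl" "dl < n" "l \<in> X \<longleftrightarrow> (l + dl) mod n \<in> X" by blast
  interpret ring_sim n X l dl N Y
    by unfold_locales (use n3' Xsub' ld N1 Ysub in auto)
  have "Fg = F" unfolding Fg_def Feq ..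
  then show ?thesis using ring_simulates by simp
qed

theorem mainTheorem12:
  assumes "generalized_fanout F"
  shows "planar_pars_simulates {F, free_terminal} not_gate \<and>
         (\<forall>F'. generalized_fanout F' \<longrightarrow> planar_pars_simulates {F, free_terminal} F') \<and>
         (\<forall>k::nat. k \<ge> 1 \<longrightarrow> planar_pars_simulates {F, free_terminal} (fanout k))"
proof (intro conjI allI impI)
  have "planar_pars_simulates {F, free_terminal} (2, {{}, {..<2} - {}})"
    by (rule gen_sim[OF assms]) auto
  moreover have "{..<2::nat} = {0, 1}" by auto
  ultimately show "planar_pars_simulates {F, free_terminal} not_gate"
    unfolding not_gate_def by simp
next
  fix F' assume F': "generalized_fanout F'"
  obtain X' where n3: "3 \<le> nports F'" and Xsub: "X' \<subseteq> {..<nports F'}"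
    and cF: "constr F' = {X', {..<nports F'} - X'}"
    using F' unfolding generalized_fanout_def by blast
  have Feq: "F' = (nports F', {X', {..<nports F'} - X'})"
    using cF unfolding nports_def constr_def by (simp add: prod_eq_iff)
  have "planar_pars_simulates {F, free_terminal} (nports F', {X', {..<nports F'} - X'})"
    by (rule gen_sim[OF assms]) (use n3 Xsub in auto)
  then show "planar_pars_simulates {F, free_terminal} F'" using Feq by simp
next
  fix k :: nat assume k: "k \<ge> 1"
  have "planar_pars_simulates {F, free_terminal} (k + 1, {{0}, {..<k + 1} - {0}})"
    by (rule gen_sim[OF assms]) auto
  moreover have "{..<k + 1} - {0} = {1..k}" by auto
  ultimately show "planar_pars_simulates {F, free_terminal} (fanout k)"
    unfolding fanout_def by simp
qed

end
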